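(* In the setting described in the context, let $\{x^k\}$, $\{\lambda^k\}$ be generated by the IAL framework, and for each $k\ge1$ let $x(\lambda^k)\in\arg\min_{x\in\mathbb{R}^n}\mathcal{L}_\beta(x;\lambda^k)$. Then for every $k\ge1$, $$\big\|(Ax(\lambda^k)-b)-(Ax^{k+1}-b)\big\|^2\le\frac{\eta_k}{\beta}.$$
   Context: Let $A\in\mathbb{R}^{m\times n}$ and $b\in\mathbb{R}^m$. Let $f:\mathbb{R}^n\to\mathbb{R}$ be convex and differentiable with Lipschitz continuous gradient. Let $g:\mathbb{R}^n\to\mathbb{R}\cup\{+\infty\}$ be a closed proper convex (possibly nonsmooth) function with bounded domain. Fix a penalty parameter $\beta>0$. For $\lambda\in\mathbb{R}^m$, define $$\hat f_\beta(x;\lambda):=f(x)+\langle\lambda,Ax-b\rangle+\tfrac{\beta}{2}\|Ax-b\|^2,\qquad \mathcal{L}_\beta(x;\lambda):=\hat f_\beta(x;\lambda)+g(x).$$ Here $\nabla\hat f_\beta(x;\lambda)$ denotes the gradient of $\hat f_\beta$ with respect to $x$. IAL framework: choose $x^1\in\operatorname{dom} g$, $\lambda^1\in\mathbb{R}^m$, and a nonnegative sequence $\{\eta_k\}$. For $k=1,2,\dots$: find a point $x^{k+1}$ such that $$\max_{x\in\mathbb{R}^n}\Big\{\langle\nabla\hat f_\beta(x^{k+1};\lambda^k),\,x^{k+1}-x\rangle+g(x^{k+1})-g(x)\Big\}\le\eta_k,$$ and then set $\lambda^{k+1}=\lambda^k+\beta(Ax^{k+1}-b)$. *)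

theory Defs
  imports "HOL-Analysis.Analysis"
begin

definition fhat :: "(real^'n \<Rightarrow> real) \<Rightarrow> real^'n^'m \<Rightarrow> real^'m \<Rightarrow> real \<Rightarrow> real^'m \<Rightarrow> real^'n \<Rightarrow> real"
  where "fhat f A b \<beta> lam x = f x + lam \<bullet> (A *v x - b) + \<beta> / 2 * (norm (A *v x - b))\<^sup>2"

text \<open>The extended-valued g is represented by its (real) values on its effective domain D;
  outside D, g (and hence the augmented Lagrangian) is +infinity.\<close>
definition auglag :: "(real^'n \<Rightarrow> real) \<Rightarrow> (real^'n \<Rightarrow> real) \<Rightarrow> real^'n^'m \<Rightarrow> real^'m \<Rightarrow> real \<Rightarrow> real^'m \<Rightarrow> real^'n \<Rightarrow> real"
  where "auglag f g A b \<beta> lam x = fhat f A b \<beta> lam x + g x"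

end

theory Submission
  imports Defs
begin

lemma norm_comb:
  fixes a c :: "'a::real_inner"
  shows "(norm ((1-t) *\<^sub>R a + t *\<^sub>R c))\<^sup>2 = (1-t)*(norm a)\<^sup>2 + t*(norm c)\<^sup>2 - t*(1-t)*(norm (a - c))\<^sup>2"
  unfolding power2_norm_eq_inner by (simp add: inner_add_left inner_add_right inner_diff_left inner_diff_right
      inner_commute algebra_simps)

lemma fhat_comb:
  fixes A :: "real^'n^'m"
  assumes f: "convex_on UNIV f" and t: "0 \<le> t" "t \<le> 1" and \<beta>: "\<beta> > 0"
  shows "fhat f A b \<beta> l ((1-t) *\<^sub>R p + t *\<^sub>R r) \<le> (1-t) * fhat f A b \<beta> l p + t * fhat f A b \<beta> l r
     - \<beta>/2 * (t*(1-t)) * (norm (A *v p - A *v r))\<^sup>2"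
proof -
  define w where "w = (1-t) *\<^sub>R p + t *\<^sub>R r"
  have fc: "f w \<le> (1-t) * f p + t * f r"
    unfolding w_def using f t by (intro convex_onD) auto
  have Aw: "A *v w - b = (1-t) *\<^sub>R (A *v p - b) + t *\<^sub>R (A *v r - b)"
    unfolding w_def by (simp add: matrix_vector_right_distrib matrix_vector_mult_diff_distrib matrix_vector_mult_scaleR algebra_simps)
  have lin: "l \<bullet> (A *v w - b) = (1-t) * (l \<bullet> (A *v p - b)) + t * (l \<bullet> (A *v r - b))"
    unfolding Aw by (simp add: inner_add_right)
  have q: "(norm (A *v w - b))\<^sup>2 = (1-t)*(norm (A *v p - b))\<^sup>2 + t*(norm (A *v r - b))\<^sup>2 - t*(1-t)*(norm (A *v p - A *v r))\<^sup>2"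
    unfolding Aw norm_comb by simp
  have "fhat f A b \<beta> l w \<le> (1-t) * fhat f A b \<beta> l p + t * fhat f A b \<beta> l r
     - \<beta>/2 * (t*(1-t)) * (norm (A *v p - A *v r))\<^sup>2"
    unfolding fhat_def lin q using fc by (simp add: field_simps)
  then show ?thesis by (simp add: w_def)
qed

lemma line_deriv:
  assumes "GDERIV F u :> G"
  shows "DERIV (\<lambda>t. F (u + t *\<^sub>R d)) 0 :> G \<bullet> d"
proof -
  have "((\<lambda>t. u + t *\<^sub>R d) has_derivative (\<lambda>t. t *\<^sub>R d)) (at 0)"
    by (auto intro!: derivative_eq_intros)
  moreover have "(F has_derivative (\<lambda>h. h \<bullet> G)) (at (u + 0 *\<^sub>R d))"
    using assms by (simp add: gderiv_def)
  ultimately have "((\<lambda>t. F (u + t *\<^sub>R d)) has_derivative (\<lambda>t. (t *\<^sub>R d) \<bullet> G)) (at 0)"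
    by (rule has_derivative_compose)
  then show ?thesis
    unfolding has_field_derivative_def
    by (rule has_derivative_eq_rhs) (auto simp: fun_eq_iff inner_commute)
qed

lemma limit_le:
  fixes q :: "real \<Rightarrow> real"
  assumes "(q \<longlongrightarrow> Q) (at_right 0)" "\<And>t. 0 < t \<Longrightarrow> t < 1 \<Longrightarrow> q t \<le> c - k*(1-t)"
  shows "Q \<le> c - k"
proof -
  have "((\<lambda>t. c - k*(1-t)) \<longlongrightarrow> c - k*(1-0)) (at_right 0)"
    by (intro tendsto_intros)
  then show ?thesis
    using assms by (intro tendsto_le[of "at_right (0::real)" "\<lambda>t. c - k*(1-t)" _ q Q])
       (auto intro!: eventually_at_rightI[of 0 1])
qed


theorem lemma2:
  fixes A :: "real^'n^'m" and b :: "real^'m"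
    and f :: "real^'n \<Rightarrow> real" and gradf :: "real^'n \<Rightarrow> real^'n" and Lf :: real
    and g :: "real^'n \<Rightarrow> real" and D :: "(real^'n) set"
    and \<beta> :: real
    and Gfhat :: "real^'m \<Rightarrow> real^'n \<Rightarrow> real^'n"
    and x :: "nat \<Rightarrow> real^'n" and lam :: "nat \<Rightarrow> real^'m" and \<eta> :: "nat \<Rightarrow> real"
    and xlam :: "nat \<Rightarrow> real^'n"
  assumes f_convex: "convex_on UNIV f"
    and f_grad: "\<And>y. GDERIV f y :> gradf y"
    and f_lip: "Lf-lipschitz_on UNIV gradf"
    and D_nonempty: "D \<noteq> {}"
    and D_convex: "convex D"
    and D_bounded: "bounded D"
    and g_convex: "convex_on D g"
    and g_closed: "closed {(y, t). y \<in> D \<and> g y \<le> t}"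
    and \<beta>_pos: "\<beta> > 0"
    and Gfhat_grad: "\<And>l y. GDERIV (fhat f A b \<beta> l) y :> Gfhat l y"
    and x1: "x 1 \<in> D"
    and \<eta>_nonneg: "\<And>k. \<eta> k \<ge> 0"
    and x_dom: "\<And>k. k \<ge> 1 \<Longrightarrow> x (k + 1) \<in> D"
    and x_inexact: "\<And>k z. k \<ge> 1 \<Longrightarrow> z \<in> D \<Longrightarrow>
        Gfhat (lam k) (x (k + 1)) \<bullet> (x (k + 1) - z) + g (x (k + 1)) - g z \<le> \<eta> k"
    and lam_update: "\<And>k. k \<ge> 1 \<Longrightarrow> lam (k + 1) = lam k + \<beta> *\<^sub>R (A *v x (k + 1) - b)"
    and xlam_dom: "\<And>k. k \<ge> 1 \<Longrightarrow> xlam k \<in> D"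
    and xlam_min: "\<And>k z. k \<ge> 1 \<Longrightarrow> z \<in> D \<Longrightarrow>
        auglag f g A b \<beta> (lam k) (xlam k) \<le> auglag f g A b \<beta> (lam k) z"
  shows "\<forall>k\<ge>1. (norm ((A *v xlam k - b) - (A *v x (k + 1) - b)))\<^sup>2 \<le> \<eta> k / \<beta>"
proof (intro allI impI)
  fix k :: nat assume k: "k \<ge> 1"
  define u where "u = x (k+1)"
  define v where "v = xlam k"
  define F where "F = fhat f A b \<beta> (lam k)"
  define G where "G = Gfhat (lam k) u"
  define s where "s = (norm (A *v v - A *v u))\<^sup>2"
  have uD: "u \<in> D" using x_dom k u_def by simp
  have vD: "v \<in> D" using xlam_dom k v_def by simp
  have L: "\<And>z. auglag f g A b \<beta> (lam k) z = F z + g z" by (simp add: auglag_def F_def)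
  have inex: "G \<bullet> (u - v) + g u - g v \<le> \<eta> k"
    using x_inexact[OF k vD] by (simp add: G_def u_def)
  have s_sym: "(norm (A *v u - A *v v))\<^sup>2 = s" by (simp add: s_def norm_minus_commute)
  have D1: "DERIV (\<lambda>t. F (u + t *\<^sub>R (v - u))) 0 :> G \<bullet> (v - u)"
    using line_deriv[OF Gfhat_grad[of "lam k" u]] by (simp add: F_def G_def)
  have lim1: "((\<lambda>t. (F (u + t *\<^sub>R (v - u)) - F u) / t) \<longlongrightarrow> G \<bullet> (v - u)) (at_right 0)"
    using D1 unfolding DERIV_def by (auto intro: filterlim_mono[OF _ order_refl at_le])
  have P1: "G \<bullet> (v - u) \<le> (F v - F u) - \<beta>/2 * s"
  proof (rule limit_le[OF lim1])
    fix t :: real assume t: "0 < t" "t < 1"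
    have eq: "u + t *\<^sub>R (v - u) = (1-t) *\<^sub>R u + t *\<^sub>R v" by (simp add: algebra_simps)
    have "F (u + t *\<^sub>R (v - u)) \<le> (1-t) * F u + t * F v - \<beta>/2 * (t*(1-t)) * s"
      unfolding eq F_def using fhat_comb[OF f_convex _ _ \<beta>_pos, where t=t and l="lam k" and p=u and r=v and b=b and A=A] t s_sym
      by simp
    then have "F (u + t *\<^sub>R (v - u)) - F u \<le> t * ((F v - F u) - \<beta>/2 * s * (1-t))"
      by (simp add: algebra_simps)
    then show "(F (u + t *\<^sub>R (v - u)) - F u) / t \<le> (F v - F u) - \<beta>/2 * s * (1-t)"
      using t by (simp add: divide_le_eq mult.commute)
  qed
  have P2: "F v + g v \<le> F u + g u - \<beta>/2 * s"
  proof (rule limit_le[where q="\<lambda>_. F v + g v"])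
    show "((\<lambda>_. F v + g v) \<longlongrightarrow> F v + g v) (at_right 0)" by simp
    fix t :: real assume t: "0 < t" "t < 1"
    define w where "w = (1-t) *\<^sub>R v + t *\<^sub>R u"
    have wD: "w \<in> D" unfolding w_def using D_convex uD vD t
      by (simp add: convex_def)
    have "F v + g v \<le> F w + g w" using xlam_min[OF k wD] L by (simp add: v_def)
    also have "F w \<le> (1-t) * F v + t * F u - \<beta>/2 * (t*(1-t)) * s"
      unfolding w_def F_def using fhat_comb[OF f_convex _ _ \<beta>_pos, where t=t and l="lam k" and p=v and r=u and b=b and A=A] t
      by (simp add: s_def)
    moreover have "g w \<le> (1-t) * g v + t * g u"
      unfolding w_def using g_convex uD vD t by (intro convex_onD) auto
    ultimately have "F v + g v \<le> (1-t) * (F v + g v) + t * (F u + g u) - t * (\<beta>/2 * s * (1-t))"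
      by (simp add: algebra_simps)
    then have "t * (F v + g v) \<le> t * (F u + g u - \<beta>/2 * s * (1-t))"
      by (simp add: algebra_simps)
    then show "F v + g v \<le> F u + g u - \<beta>/2 * s * (1-t)"
      using t by simp
  qed
  have "\<beta> * s \<le> \<eta> k"
    using P1 P2 inex by (simp add: inner_diff_right algebra_simps)
  then have "s \<le> \<eta> k / \<beta>" using \<beta>_pos by (simp add: le_divide_eq mult.commute)
  then show "(norm ((A *v xlam k - b) - (A *v x (k + 1) - b)))\<^sup>2 \<le> \<eta> k / \<beta>"
    by (simp add: s_def u_def v_def)
qed

end
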